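(* Let $P$ be a finite set of prime numbers and let $q$ be the smallest prime not contained in $P$. Then there is a generalized Euclid sequence with seed $P$ that contains $q$.
   Context: Given a finite set $\{p_1,\ldots,p_k\}$ of distinct primes, for any $I\subseteq\{1,\ldots,k\}$ put $N_I=\prod_{i\in I}p_i+\prod_{i\in\{1,\ldots,k\}\setminus I}p_i$ (empty products equal $1$); $N_I>1$ is coprime to $p_1\cdots p_k$. A generalized Euclid sequence with seed $\{p_1,\ldots,p_k\}$ is an infinite sequence of primes $p_1,p_2,\ldots$ beginning with the seed primes (in some order) such that for every $j\ge k$, $p_{j+1}$ is a prime factor of $N_I$ for some $I\subseteq\{1,\ldots,j\}$ (formed with $p_1,\ldots,p_j$). Equivalently, $p_{j+1}$ is a prime divisor of $d+n/d$ for some positive divisor $d$ of $n=p_1\cdots p_j$. *)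

theory Defs
  imports "HOL-Computational_Algebra.Primes"
begin

definition gen_euclid_seq :: "nat set \<Rightarrow> (nat \<Rightarrow> nat) \<Rightarrow> bool" where
  "gen_euclid_seq P p \<longleftrightarrow>
     finite P \<and> (\<forall>r\<in>P. prime r) \<and>
     p ` {..<card P} = P \<and>
     (\<forall>j. prime (p j)) \<and>
     (\<forall>j\<ge>card P. \<exists>d. d dvd (\<Prod>i<j. p i) \<and> p j dvd (d + (\<Prod>i<j. p i) div d))"

end

theory Submission
  imports Defs "HOL-Number_Theory.Number_Theory"
begin


fun vchain :: "nat \<Rightarrow> nat list \<Rightarrow> bool" where
  "vchain n [] = True"
| "vchain n (r # rs) = (prime r \<and> (\<exists>d. d dvd n \<and> r dvd (d + n div d)) \<and> vchain (n*r) rs)"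

locale qctx =
  fixes q :: nat
  assumes qp: "prime q"
begin

definition reach :: "nat \<Rightarrow> bool" where
  "reach n \<longleftrightarrow> (\<exists>rs. vchain n rs \<and> q \<in> set rs)"

lemma R1: "d dvd n \<Longrightarrow> q dvd (d + n div d) \<Longrightarrow> reach n"
  unfolding reach_def by (rule exI[of _ "[q]"]) (use qp in auto)

lemma R2: "d dvd n \<Longrightarrow> prime r \<Longrightarrow> r dvd (d + n div d) \<Longrightarrow> reach (n*r) \<Longrightarrow> reach n"
proof -
  assume a: "d dvd n" "prime r" "r dvd (d + n div d)" "reach (n*r)"
  then obtain rs where "vchain (n*r) rs" "q \<in> set rs" unfolding reach_def by blast
  then show ?thesis unfolding reach_def using a by (intro exI[of _ "r # rs"]) auto
qed

lemma q2: "q \<ge> 2" using qp prime_ge_2_nat by blast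

definition G :: "nat set" where "G = {1..<q}"

lemma canc: "\<not> q dvd k \<Longrightarrow> (k*a) mod q = (k*b) mod q \<Longrightarrow> a mod q = b mod q"
proof -
  assume "\<not> q dvd k" "(k*a) mod q = (k*b) mod q"
  then have "coprime k q" using prime_imp_coprime[OF qp] coprime_commute by blast
  then show ?thesis using \<open>(k*a) mod q = (k*b) mod q\<close> cong_mult_lcancel_nat unfolding cong_def by blast
qed

lemma LS:
  assumes cl: "\<And>a b. a \<in> M \<Longrightarrow> b \<in> M \<Longrightarrow> (a*b) mod q \<in> M" and one: "1 \<in> M"
  shows "0 < N \<Longrightarrow> (\<forall>r. prime r \<longrightarrow> r dvd N \<longrightarrow> r mod q \<in> M) \<Longrightarrow> N mod q \<in> M"
proof (induction N rule: less_induct)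
  case (less N)
  show ?case
  proof (cases "N = 1")
    case True then show ?thesis using one q2 by simp
  next
    case False
    then obtain r where r: "prime r" "r dvd N" using prime_factor_nat by blast
    then obtain m where m: "N = r * m" by blast
    have "m > 0" using less.prems m by (simp add: nat_0_less_mult_iff)
    have "m < N" using m r(1) prime_gt_1_nat \<open>m > 0\<close> less.prems by (simp add: m)
    have "m mod q \<in> M" using less.IH[OF \<open>m < N\<close> \<open>m > 0\<close>] less.prems m by auto
    moreover have "r mod q \<in> M" using less.prems r by auto
    ultimately have "((r mod q) * (m mod q)) mod q \<in> M" using cl by blast
    then show ?thesis by (simp add: m mod_mult_eq)
  qed
qed

lemma LS':
  assumes cl: "\<And>a b. a \<in> M \<Longrightarrow> b \<in> M \<Longrightarrow> (a*b) mod q \<in> M" and one: "1 \<in> M"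
    and "0 < N" "N mod q \<notin> M"
  shows "\<exists>r. prime r \<and> r dvd N \<and> r mod q \<notin> M"
  using LS[OF cl one] assms(3,4) by blast

lemma CL:
  assumes cl: "\<And>a b. a \<in> S \<Longrightarrow> b \<in> S \<Longrightarrow> (a*b) mod q \<in> S" and one: "1 \<in> S"
    and pr: "\<And>p. prime p \<Longrightarrow> p < q \<Longrightarrow> p \<noteq> p0 \<Longrightarrow> p \<in> S" and p0: "prime p0"
  shows "x \<in> G \<Longrightarrow> \<not> p0 dvd x \<Longrightarrow> x \<in> S"
proof (induction x rule: less_induct)
  case (less x)
  show ?case
  proof (cases "x = 1")
    case True then show ?thesis using one by simp
  next
    case False
    then obtain p where p: "prime p" "p dvd x" using prime_factor_nat by blast
    then obtain m where m: "x = p * m" by blast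
    have x0: "x > 0" "x < q" using less.prems by (auto simp: G_def)
    have "m > 0" using x0 m by (simp add: nat_0_less_mult_iff)
    have "m < x" using m p(1) prime_gt_1_nat \<open>m > 0\<close> x0 by (simp add: m)
    have "p \<le> x" using p x0 by (simp add: dvd_imp_le)
    have "p \<noteq> p0" using p less.prems by blast
    have "\<not> p0 dvd m" using less.prems m by auto
    have "m \<in> S" using less.IH[OF \<open>m < x\<close>] \<open>m > 0\<close> \<open>m < x\<close> x0 \<open>\<not> p0 dvd m\<close> by (auto simp: G_def)
    moreover have "p \<in> S" using pr p \<open>p \<le> x\<close> x0 \<open>p \<noteq> p0\<close> by auto
    ultimately have "(p*m) mod q \<in> S" using cl by blast
    then show ?thesis using m x0 by simp
  qed
qed

end



context qctx begin

definition T :: "nat \<Rightarrow> nat set" where "T n = (\<lambda>d. d mod q) ` {d. d dvd n}"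

lemma T_sub: "0 < n \<Longrightarrow> \<not> q dvd n \<Longrightarrow> T n \<subseteq> G"
proof
  fix x assume a: "0 < n" "\<not> q dvd n" "x \<in> T n"
  then obtain d where d: "d dvd n" "x = d mod q" unfolding T_def by blast
  have "\<not> q dvd d" using d a dvd_trans by blast
  then show "x \<in> G" using d q2 by (auto simp: G_def mod_eq_0_iff_dvd[symmetric] Suc_le_eq)
qed

lemma T_fin: "finite (T n)" unfolding T_def
proof -
  have "(\<lambda>d. d mod q) ` {d. d dvd n} \<subseteq> {..<q}" using q2 by auto
  then show "finite ((\<lambda>d. d mod q) ` {d. d dvd n})" using finite_subset by blast
qed

lemma T_one: "1 \<in> T n" unfolding T_def using q2 by (auto intro!: image_eqI[of _ _ 1])

lemma T_mono: "T n \<subseteq> T (n*r)" unfolding T_def by auto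

lemma T_mul: "t \<in> T n \<Longrightarrow> (r*t) mod q \<in> T (n*r)"
proof -
  assume "t \<in> T n"
  then obtain d where d: "d dvd n" "t = d mod q" unfolding T_def by blast
  have "r*d dvd n*r" using d by (simp add: mult.commute mult_dvd_mono)
  moreover have "(r*t) mod q = (r*d) mod q" using d by (simp add: mod_mult_right_eq)
  ultimately show ?thesis unfolding T_def by blast
qed

lemma T_prime: "p dvd n \<Longrightarrow> p < q \<Longrightarrow> p \<in> T n"
  unfolding T_def by (rule image_eqI[of _ _ p]) auto

lemma T_two: "p1 dvd n \<Longrightarrow> p2 dvd n \<Longrightarrow> prime p1 \<Longrightarrow> prime p2 \<Longrightarrow> p1 \<noteq> p2 \<Longrightarrow> (p1*p2) mod q \<in> T n"
proof -
  assume a: "p1 dvd n" "p2 dvd n" "prime p1" "prime p2" "p1 \<noteq> p2"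
  then have "coprime p1 p2" using primes_coprime by blast
  then have "p1*p2 dvd n" using a divides_mult by blast
  then show ?thesis unfolding T_def by blast
qed

definition dv :: "nat \<Rightarrow> nat \<Rightarrow> nat" where "dv n t = (SOME d. d dvd n \<and> d mod q = t)"

lemma dv: "t \<in> T n \<Longrightarrow> dv n t dvd n \<and> dv n t mod q = t"
  unfolding dv_def T_def by (rule someI_ex) auto

definition cmp :: "nat \<Rightarrow> nat \<Rightarrow> nat" where "cmp n t = (n div dv n t) mod q"
definition F :: "nat \<Rightarrow> nat \<Rightarrow> nat" where "F n t = (dv n t + n div dv n t) mod q"

lemma F_eq: "t \<in> T n \<Longrightarrow> F n t = (t + cmp n t) mod q"
proof -
  assume t: "t \<in> T n"
  have "(dv n t + n div dv n t) mod q = (dv n t mod q + (n div dv n t) mod q) mod q" by (rule mod_add_eq[symmetric])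
  then show ?thesis unfolding F_def cmp_def using dv[OF t] by simp
qed

lemma WD:
  assumes "0 < n" "\<not> q dvd n" "d1 dvd n" "d2 dvd n" "d1 mod q = d2 mod q"
  shows "(n div d1) mod q = (n div d2) mod q"
proof -
  have e1: "d1 * (n div d1) = n" "d2 * (n div d2) = n" using assms by auto
  have "(d1 * (n div d2)) mod q = (d2 * (n div d2)) mod q"
    using assms(5) by (metis mod_mult_left_eq)
  then have "(d1 * (n div d1)) mod q = (d1 * (n div d2)) mod q" using e1 by simp
  moreover have "\<not> q dvd d1" using assms dvd_trans by blast
  ultimately show ?thesis using canc by blast
qed

lemma cmp_any: "0 < n \<Longrightarrow> \<not> q dvd n \<Longrightarrow> t \<in> T n \<Longrightarrow> d dvd n \<Longrightarrow> d mod q = t \<Longrightarrow> cmp n t = (n div d) mod q"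
  unfolding cmp_def using WD dv by metis

lemma cmp_T: "t \<in> T n \<Longrightarrow> cmp n t \<in> T n"
proof -
  assume t: "t \<in> T n"
  define D where "D = dv n t"
  obtain k where k: "n = D * k" using dv[OF t] D_def by blast
  have "n div D dvd n" by (cases "D = 0") (use k in auto)
  then have "n div dv n t dvd n" using D_def by simp
  then show ?thesis unfolding cmp_def T_def by blast
qed

lemma cmp_cmp: assumes "0 < n" "\<not> q dvd n" "t \<in> T n" shows "cmp n (cmp n t) = t"
proof -
  define D where "D = dv n t"
  obtain k where k: "n = D * k" using dv[OF assms(3)] D_def by blast
  have "D > 0 \<and> k > 0" using assms(1) k by (metis nat_0_less_mult_iff)
  then have "D > 0" "k > 0" by auto
  have 1: "n div D = k" using k \<open>D > 0\<close> by simp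
  have 2: "n div k = D" using k \<open>k > 0\<close> by simp
  have "k dvd n" using k by simp
  moreover have "k mod q = cmp n t" using 1 D_def unfolding cmp_def by simp
  ultimately
  have "cmp n (cmp n t) = (n div k) mod q" using cmp_any[OF assms(1,2) cmp_T[OF assms(3)]] by blast
  then show ?thesis using 2 D_def dv[OF assms(3)] by simp
qed

lemma FL:
  assumes n: "0 < n" "\<not> q dvd n" and t: "t \<in> T n" "t' \<in> T n" and eq: "F n t = F n t'"
  shows "t' = t \<or> t' = cmp n t"
proof -
  define d where "d = dv n t"
  define d' where "d' = dv n t'"
  define e where "e = n div d"
  define e' where "e' = n div d'"
  have dd: "d dvd n" "d mod q = t" "d' dvd n" "d' mod q = t'" using dv[OF t(1)] dv[OF t(2)] d_def d'_def by auto
  have de: "d * e = n" "d' * e' = n" using dd e_def e'_def by auto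
  have ndq: "\<not> q dvd d" using dd n dvd_trans by blast
  have "(d + e) mod q = (d' + e') mod q" using eq unfolding F_def d_def d'_def e_def e'_def .
  then have "[int (d + e) = int (d' + e')] (mod int q)" using cong_int_iff unfolding cong_def by blast
  then have "int q dvd (int d + int e - int d' - int e')" using cong_iff_dvd_diff by (auto simp: algebra_simps)
  then have "int q dvd (int d * int d') * (int d + int e - int d' - int e')" by simp
  moreover have "(int d * int d') * (int d + int e - int d' - int e') = (int d - int d') * (int d * int d' - int d * int e)"
  proof -
    have "int d * int e = int d' * int e'" using de by (metis of_nat_mult)
    then show ?thesis by (simp add: algebra_simps)
  qed
  ultimately have "int q dvd (int d - int d') * (int d * int d' - int d * int e)" by simp
  moreover have pq: "prime (int q)" using qp by simp
  ultimately have "int q dvd (int d - int d') \<or> int q dvd (int d * (int d' - int e))"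
    using prime_dvd_mult_iff by (metis right_diff_distrib)
  moreover have "\<not> int q dvd int d" using ndq by simp
  ultimately have "int q dvd (int d - int d') \<or> int q dvd (int d' - int e)"
    using prime_dvd_mult_iff[OF pq] by blast
  then have "[int d = int d'] (mod int q) \<or> [int d' = int e] (mod int q)"
    using cong_iff_dvd_diff by blast
  then have "d mod q = d' mod q \<or> d' mod q = e mod q" using cong_int_iff unfolding cong_def by blast
  then show ?thesis using dd unfolding cmp_def e_def d_def by auto
qed

lemma count:
  assumes n: "0 < n" "\<not> q dvd n" and M: "finite M" and FM: "\<forall>t\<in>T n. F n t \<in> M"
  shows "card (T n) \<le> 2 * card M"
proof -
  define phi where "phi t = (F n t, t \<le> cmp n t)" for t
  have "inj_on phi (T n)"
  proof
    fix t t' assume a: "t \<in> T n" "t' \<in> T n" "phi t = phi t'"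
    then have eq: "F n t = F n t'" and fl: "(t \<le> cmp n t) = (t' \<le> cmp n t')" unfolding phi_def by auto
    show "t = t'"
    proof (rule ccontr)
      assume "t \<noteq> t'"
      then have c1: "t' = cmp n t" using FL[OF n a(1,2) eq] by auto
      then have c2: "cmp n t' = t" using cmp_cmp[OF n a(1)] by simp
      show False using fl c1 c2 \<open>t \<noteq> t'\<close> by auto
    qed
  qed
  moreover have "phi ` T n \<subseteq> M \<times> (UNIV :: bool set)" using FM unfolding phi_def by auto
  ultimately have "card (T n) \<le> card (M \<times> (UNIV :: bool set))"
    using card_inj_on_le M by (metis finite_SigmaI finite_code)
  then show ?thesis by (simp add: card_cartesian_product)
qed

end



context qctx begin

lemma G_mod: "x \<in> G \<Longrightarrow> x mod q = x" by (simp add: G_def)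

lemma G_ndvd: "x \<in> G \<Longrightarrow> \<not> q dvd x" by (auto simp: G_def dest: dvd_imp_le)

lemma Gmul: "a \<in> G \<Longrightarrow> b \<in> G \<Longrightarrow> (a*b) mod q \<in> G"
proof -
  assume "a \<in> G" "b \<in> G"
  then have "\<not> q dvd a*b" using G_ndvd prime_dvd_mult_iff[OF qp] by blast
  then show ?thesis using q2 by (auto simp: G_def mod_eq_0_iff_dvd[symmetric] Suc_le_eq)
qed

lemma fin_G: "finite G" by (simp add: G_def)

lemma inG: "1 \<le> x \<Longrightarrow> x < q \<Longrightarrow> x \<in> G" by (simp add: G_def)

lemma cardG: "card G = q - 1" by (simp add: G_def)

lemma CLG:
  assumes cl: "\<And>a b. a \<in> S \<Longrightarrow> b \<in> S \<Longrightarrow> (a*b) mod q \<in> S" and one: "1 \<in> S"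
    and pr: "\<And>p. prime p \<Longrightarrow> p < q \<Longrightarrow> p \<in> S"
  shows "G \<subseteq> S"
proof
  fix x assume x: "x \<in> G"
  have pr': "\<And>p. prime p \<Longrightarrow> p < q \<Longrightarrow> p \<noteq> q \<Longrightarrow> p \<in> S" using pr by blast
  show "x \<in> S" using CL[OF cl one pr' qp x] G_ndvd[OF x] by blast
qed

definition Stab :: "nat set \<Rightarrow> nat set" where "Stab A = {x \<in> G. \<forall>t\<in>A. (x*t) mod q \<in> A}"

lemma arith1: "p0 < q \<Longrightarrow> ((q-1)*(q-p0)) mod q = p0"
proof -
  assume "p0 < q"
  then obtain b where b: "q = p0 + Suc b" by (metis add_Suc_right less_imp_Suc_add)
  have "(q-1)*(q-p0) = p0 + q*b" using b by (simp add: algebra_simps)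
  then show ?thesis using \<open>p0 < q\<close> by simp
qed

lemma arith2: "q \<ge> 2 \<Longrightarrow> ((q-1)*2) mod q = q - 2"
proof -
  assume "q \<ge> 2"
  then have "(q-1)*2 = (q-2) + q" by simp
  then have "((q-1)*2) mod q = (q-2) mod q" by simp
  then show ?thesis using \<open>q \<ge> 2\<close> by simp
qed

lemma grow:
  assumes n: "0 < n" "\<not> q dvd n" and sp: "\<forall>p. prime p \<longrightarrow> p < q \<longrightarrow> p dvd n" and ne: "T n \<noteq> G"
  shows "\<exists>d. d dvd n \<and> (d + n div d) mod q \<notin> Stab (T n)"
proof (rule ccontr)
  assume H: "\<not> ?thesis"
  define A where "A = T n"
  define M where "M = Stab A"
  have AG: "A \<subseteq> G" using T_sub[OF n] A_def by simp
  have finA: "finite A" using T_fin A_def by simp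
  have A1: "1 \<in> A" using T_one A_def by simp
  have Asp: "\<And>p. prime p \<Longrightarrow> p < q \<Longrightarrow> p \<in> A" using T_prime sp A_def by blast
  have ne': "A \<noteq> G" using ne A_def by simp
  have MG: "M \<subseteq> G" unfolding M_def Stab_def by auto
  have MA: "M \<subseteq> A"
  proof
    fix x assume "x \<in> M"
    then have "x \<in> G" "(x*1) mod q \<in> A" using A1 unfolding M_def Stab_def by auto
    then show "x \<in> A" using G_mod by simp
  qed
  have Mcl: "\<And>a b. a \<in> M \<Longrightarrow> b \<in> M \<Longrightarrow> (a*b) mod q \<in> M"
  proof -
    fix a b assume ab: "a \<in> M" "b \<in> M"
    have "(a*b) mod q \<in> G" using ab MG Gmul by blast
    moreover have "\<forall>t\<in>A. ((a*b) mod q * t) mod q \<in> A"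
    proof
      fix t assume "t \<in> A"
      then have "(b*t) mod q \<in> A" using ab unfolding M_def Stab_def by auto
      then have "(a*((b*t) mod q)) mod q \<in> A" using ab unfolding M_def Stab_def by auto
      then show "((a*b) mod q * t) mod q \<in> A" by (simp add: mod_mult_left_eq mod_mult_right_eq mult.assoc)
    qed
    ultimately show "(a*b) mod q \<in> M" unfolding M_def Stab_def by auto
  qed
  have M1: "1 \<in> M" unfolding M_def Stab_def G_def using q2 AG by (auto simp: G_def subset_iff)
  have FM: "\<forall>t\<in>T n. F n t \<in> M" using H dv unfolding F_def M_def A_def by blast
  have cnt: "card A \<le> 2 * card M" using count[OF n finite_subset[OF MG fin_G] FM] A_def by simp
  have surjmul: "\<And>m t. m \<in> M \<Longrightarrow> t \<in> A \<Longrightarrow> \<exists>u\<in>A. (m*u) mod q = t"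
  proof -
    fix m t assume mt: "m \<in> M" "t \<in> A"
    have "inj_on (\<lambda>u. (m*u) mod q) A"
    proof
      fix u u' assume uu: "u \<in> A" "u' \<in> A" "(m*u) mod q = (m*u') mod q"
      have "m \<in> G" using mt MG by blast
      then have "\<not> q dvd m" by (rule G_ndvd)
      then have "u mod q = u' mod q" using canc uu(3) by blast
      moreover have "u \<in> G" "u' \<in> G" using uu AG by auto
      ultimately show "u = u'" using G_mod by simp
    qed
    moreover have "(\<lambda>u. (m*u) mod q) ` A \<subseteq> A" using mt unfolding M_def Stab_def by auto
    ultimately have "(\<lambda>u. (m*u) mod q) ` A = A" using endo_inj_surj[OF finA] by blast
    then have "t \<in> (\<lambda>u. (m*u) mod q) ` A" using mt by simp
    then show "\<exists>u\<in>A. (m*u) mod q = t" by blast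
  qed
  have M2: "\<And>x m. x \<in> G \<Longrightarrow> m \<in> M \<Longrightarrow> (x*m) mod q \<in> M \<Longrightarrow> x \<in> M"
  proof -
    fix x m assume xm: "x \<in> G" "m \<in> M" "(x*m) mod q \<in> M"
    have "\<forall>t\<in>A. (x*t) mod q \<in> A"
    proof
      fix t assume "t \<in> A"
      then obtain u where u: "u \<in> A" "(m*u) mod q = t" using surjmul xm by blast
      have "((x*m) mod q * u) mod q \<in> A" using xm u unfolding M_def Stab_def by auto
      moreover have "((x*m) mod q * u) mod q = (x*(m*u)) mod q" by (simp add: mod_mult_left_eq mult.assoc)
      moreover have "(x*t) mod q = (x*(m*u)) mod q" using u(2) by (metis mod_mult_right_eq)
      ultimately show "(x*t) mod q \<in> A" by simp
    qed
    then show "x \<in> M" using xm unfolding M_def Stab_def by auto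
  qed
  have Aclosed_imp: "(\<And>a b. a \<in> A \<Longrightarrow> b \<in> A \<Longrightarrow> (a*b) mod q \<in> A) \<Longrightarrow> False"
  proof -
    assume cl: "\<And>a b. a \<in> A \<Longrightarrow> b \<in> A \<Longrightarrow> (a*b) mod q \<in> A"
    have "G \<subseteq> A" using CLG[OF cl A1 Asp] .
    then show False using AG ne' by blast
  qed
  show False
  proof (cases "A = M")
    case True
    then show False using Aclosed_imp Mcl by blast
  next
    case False
    define U where "U = A - M"
    have UM: "\<And>u. u \<in> U \<Longrightarrow> (\<lambda>m. (u*m) mod q) ` M = U"
    proof -
      fix u assume u: "u \<in> U"
      have sub: "(\<lambda>m. (u*m) mod q) ` M \<subseteq> U"
      proof
        fix y assume "y \<in> (\<lambda>m. (u*m) mod q) ` M"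
        then obtain m where m: "m \<in> M" "y = (u*m) mod q" by blast
        have "y \<in> A" using m u unfolding U_def M_def Stab_def by (auto simp: mult.commute)
        moreover have "y \<notin> M" using M2[of u m] m u AG unfolding U_def by auto
        ultimately show "y \<in> U" unfolding U_def by blast
      qed
      have "inj_on (\<lambda>m. (u*m) mod q) M"
      proof
        fix m m' assume mm: "m \<in> M" "m' \<in> M" "(u*m) mod q = (u*m') mod q"
        have "u \<in> G" using u AG unfolding U_def by auto
        then have "\<not> q dvd u" by (rule G_ndvd)
        then have "m mod q = m' mod q" using canc mm(3) by blast
        moreover have "m \<in> G" "m' \<in> G" using mm MG by auto
        ultimately show "m = m'" using G_mod by simp
      qed
      then have c1: "card ((\<lambda>m. (u*m) mod q) ` M) = card M" by (rule card_image)
      have finM: "finite M" using finite_subset[OF MA finA] .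
      have "card U = card A - card M" unfolding U_def using card_Diff_subset[OF finM MA] .
      moreover have "card M \<le> card A" using card_mono[OF finA MA] .
      ultimately have "card U \<le> card M" using cnt by simp
      moreover have fU: "finite U" using finA U_def by simp
      moreover have "card ((\<lambda>m. (u*m) mod q) ` M) \<le> card U" using card_mono[OF fU sub] .
      ultimately have "card ((\<lambda>m. (u*m) mod q) ` M) = card U" using c1 by simp
      then show "(\<lambda>m. (u*m) mod q) ` M = U" using card_subset_eq[OF fU sub] by blast
    qed
    have one: "\<And>p1 p2. prime p1 \<Longrightarrow> prime p2 \<Longrightarrow> p1 dvd n \<Longrightarrow> p2 dvd n \<Longrightarrow> p1 \<noteq> p2 \<Longrightarrow>
                 p1 mod q \<notin> M \<Longrightarrow> p2 mod q \<notin> M \<Longrightarrow> False"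
    proof -
      fix p1 p2 assume p: "prime p1" "prime p2" "p1 dvd n" "p2 dvd n" "p1 \<noteq> p2" "p1 mod q \<notin> M" "p2 mod q \<notin> M"
      have "p1 mod q \<in> A" "p2 mod q \<in> A" using p(3,4) unfolding A_def T_def by auto
      then have U1: "p1 mod q \<in> U" "p2 mod q \<in> U" using p(6,7) unfolding U_def by auto
      have x: "(p1*p2) mod q \<in> A" using T_two[OF p(3,4,1,2,5)] A_def by simp
      have nq1: "\<not> q dvd p1" using p(3) n(2) dvd_trans by blast
      show False
      proof (cases "(p1*p2) mod q \<in> M")
        case False
        then have "(p1*p2) mod q \<in> U" using x U_def by blast
        then have "(p1*p2) mod q \<in> (\<lambda>m. (p1 mod q*m) mod q) ` M" using UM[OF U1(1)] by simp
        then obtain m where m: "m \<in> M" "(p1*p2) mod q = (p1 mod q * m) mod q" by blast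
        then have "(p1*p2) mod q = (p1*m) mod q" by (simp add: mod_mult_left_eq)
        then have "p2 mod q = m mod q" using canc[OF nq1] by blast
        moreover have "m \<in> G" using m MG by auto
        ultimately show False using m p G_mod by simp
      next
        case True
        have "\<And>a b. a \<in> A \<Longrightarrow> b \<in> A \<Longrightarrow> (a*b) mod q \<in> A"
        proof -
          fix a b assume ab: "a \<in> A" "b \<in> A"
          show "(a*b) mod q \<in> A"
          proof (cases "a \<in> M")
            case True then show ?thesis using ab unfolding M_def Stab_def by auto
          next
            case aM: False
            show ?thesis
            proof (cases "b \<in> M")
              case True then show ?thesis using ab unfolding M_def Stab_def by (auto simp: mult.commute)
            next
              case False
              then have "a \<in> U" "b \<in> U" using aM ab U_def by auto
              then have "a \<in> (\<lambda>m. (p1 mod q*m) mod q) ` M" "b \<in> (\<lambda>m. (p2 mod q*m) mod q) ` M"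
                using UM[OF U1(1)] UM[OF U1(2)] by simp_all
              then obtain m m' where mm: "m \<in> M" "a = (p1 mod q * m) mod q" "m' \<in> M" "b = (p2 mod q * m') mod q"
                by blast
              have e1: "a = (p1*m) mod q" using mm(2) by (simp add: mod_mult_left_eq)
              have e2: "b = (p2*m') mod q" using mm(4) by (simp add: mod_mult_left_eq)
              have "(a*b) mod q = ((p1*m)*(p2*m')) mod q" unfolding e1 e2 by (rule mod_mult_eq)
              moreover have "((p1*p2) mod q * ((m*m') mod q)) mod q = ((p1*p2)*(m*m')) mod q" by (rule mod_mult_eq)
              moreover have "(p1*m)*(p2*m') = (p1*p2)*(m*m')" by (simp add: ac_simps)
              ultimately have "(a*b) mod q = ((p1*p2) mod q * ((m*m') mod q)) mod q" by simp
              moreover have "(m*m') mod q \<in> M" using Mcl mm(1,3) by blast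
              moreover have "((p1*p2) mod q * ((m*m') mod q)) mod q \<in> M" using Mcl True calculation(2) by blast
              ultimately show ?thesis using MA by auto
            qed
          qed
        qed
        then show False using Aclosed_imp by blast
      qed
    qed
    obtain p0 where p0: "prime p0" "p0 < q" "p0 \<notin> M"
    proof -
      have "\<not> G \<subseteq> M" using MA AG ne' by blast
      then have "\<not> (\<forall>p. prime p \<longrightarrow> p < q \<longrightarrow> p \<in> M)" using CLG[OF Mcl M1] by blast
      then show ?thesis using that by blast
    qed
    have others: "\<And>p. prime p \<Longrightarrow> p < q \<Longrightarrow> p \<noteq> p0 \<Longrightarrow> p \<in> M"
    proof (rule ccontr)
      fix p assume pp: "prime p" "p < q" "p \<noteq> p0" "p \<notin> M"
      have "p mod q \<notin> M" "p0 mod q \<notin> M" using pp p0 by auto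
      then show False using one[OF pp(1) p0(1) _ _ pp(3)] sp pp p0 by blast
    qed
    have Mx: "\<And>x. x \<in> G \<Longrightarrow> \<not> p0 dvd x \<Longrightarrow> x \<in> M" using CL[OF Mcl M1 others p0(1)] by blast
    have q5: "q \<ge> 5"
    proof -
      have "q \<noteq> 2"
      proof
        assume q2': "q = 2"
        have "G \<subseteq> A"
        proof
          fix x assume "x \<in> G"
          then have "x \<in> {1..<q}" by (simp add: G_def)
          then have "1 \<le> x" "x < 2" using q2' by auto
          then have "x = 1" by linarith
          then show "x \<in> A" using A1 by simp
        qed
        then show False using AG ne' by blast
      qed
      moreover have "q \<noteq> 3"
      proof
        assume q3: "q = 3"
        have "2 \<in> A" using Asp[of 2] q3 by simp
        have "G \<subseteq> A"
        proof
          fix x assume "x \<in> G"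
          then have "x \<in> {1..<q}" by (simp add: G_def)
          then have "1 \<le> x" "x < 3" using q3 by auto
          then have "x = 1 \<or> x = 2" by linarith
          then show "x \<in> A" using A1 \<open>2 \<in> A\<close> by auto
        qed
        then show False using AG ne' by blast
      qed
      moreover have "q \<noteq> 4"
      proof
        assume "q = 4"
        then have p4: "prime (4::nat)" using qp by simp
        have "\<forall>m. m dvd (4::nat) \<longrightarrow> m = 1 \<or> m = 4" using p4 prime_nat_iff by blast
        then have "(2::nat) dvd 4 \<longrightarrow> (2::nat) = 1 \<or> (2::nat) = 4" by blast
        then show False by simp
      qed
      ultimately show ?thesis using q2 by linarith
    qed
    have qodd: "odd q" using prime_odd_nat[OF qp] q5 by simp
    show False
    proof (cases "p0 = 2")
      case True
      obtain k where k: "q = 2*k+1" using qodd oddE by blast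
      have k2: "k \<ge> 2" using k q5 by linarith
      obtain y where yG: "y \<in> G" "odd y" and y2: "(2*y) mod q = 1 \<or> (2*y) mod q = 3"
      proof (cases "odd (k+1)")
        case True
        have e: "2*(k+1) = 1 + q" using k by simp
        have "(2*(k+1)) mod q = (1 + q) mod q" by (simp only: e)
        also have "... = 1 mod q" by (rule mod_add_self2)
        also have "... = 1" using q5 by simp
        finally have "(2*(k+1)) mod q = 1" .
        moreover have "k+1 \<in> G" using k k2 by (intro inG) auto
        ultimately show ?thesis using that True by blast
      next
        case False
        then have "odd (k+2)" by simp
        have e: "2*(k+2) = 3 + q" using k by simp
        have "(2*(k+2)) mod q = (3 + q) mod q" by (simp only: e)
        also have "... = 3 mod q" by (rule mod_add_self2)
        also have "... = 3" using q5 by simp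
        finally have "(2*(k+2)) mod q = 3" .
        moreover have "k+2 \<in> G" using k k2 by (intro inG) auto
        ultimately show ?thesis using that \<open>odd (k+2)\<close> by blast
      qed
      have "(2*y) mod q \<in> G" "\<not> 2 dvd (2*y) mod q"
        using y2 q5 by (auto intro: inG)
      then have "(2*y) mod q \<in> M" using Mx True by blast
      moreover have "y \<in> M" using Mx yG True by auto
      moreover have "2 \<in> G" using q5 by (intro inG) auto
      ultimately have "2 \<in> M" using M2[of 2 y] by blast
      then show False using p0 True by simp
    next
      case False
      have "p0 \<ge> 2" using p0 prime_ge_2_nat by blast
      then have p03: "p0 \<ge> 3" using False by linarith
      have two: "2 \<in> M" using others[of 2] False q5 by auto
      have qm1: "q - 1 \<in> M"
      proof (cases "p0 dvd q - 1")
        case False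
        have "q - 1 \<in> G" using q5 by (intro inG) auto
        then show ?thesis using Mx False by blast
      next
        case True
        have "\<not> p0 dvd q - 2"
        proof
          assume "p0 dvd q - 2"
          then have "p0 dvd (q-1) - (q-2)" using True dvd_diff_nat by blast
          moreover have "(q-1) - (q-2) = 1" using q5 by simp
          ultimately show False using p03 by simp
        qed
        moreover have "q - 2 \<in> G" using q5 by (intro inG) auto
        ultimately have "q - 2 \<in> M" using Mx by blast
        then have "((q-1)*2) mod q \<in> M" using arith2 q2 by simp
        moreover have "q - 1 \<in> G" using q5 by (intro inG) auto
        ultimately show ?thesis using M2[of "q-1" 2] two by blast
      qed
      have "\<not> p0 dvd q - p0"
      proof
        assume "p0 dvd q - p0"
        then have "p0 dvd (q - p0) + p0" by simp
        then have "p0 dvd q" using p0 by simp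
        then have "p0 = 1 \<or> p0 = q" using qp unfolding prime_nat_iff by blast
        then show False using p0 p03 by linarith
      qed
      moreover have "q - p0 \<in> G" using p0 p03 by (intro inG) auto
      ultimately have "q - p0 \<in> M" using Mx by blast
      then have "((q-1)*(q-p0)) mod q \<in> M" using Mcl qm1 by blast
      then show False using arith1 p0 by simp
    qed
  qed
qed

end



context qctx begin

definition Qs :: "nat set" where "Qs = {x \<in> G. \<exists>y\<in>G. (y*y) mod q = x}"

lemma Qs_G: "Qs \<subseteq> G" unfolding Qs_def by auto

lemma sq_Qs: "y \<in> G \<Longrightarrow> (y*y) mod q \<in> Qs" unfolding Qs_def using Gmul by blast

lemma G_iff: "x \<in> G \<longleftrightarrow> 1 \<le> x \<and> x < q" by (simp add: G_def)

lemma QR_iff: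
  assumes x: "x \<in> G"
  shows "x \<in> Qs \<longleftrightarrow> QuadRes (int q) (int x)"
proof
  assume "x \<in> Qs"
  then obtain y where y: "(y*y) mod q = x" unfolding Qs_def by blast
  then have "[y*y = x] (mod q)" using G_mod[OF x] by (simp add: cong_def)
  then have "[int y ^ 2 = int x] (mod int q)" using cong_int_iff by (metis of_nat_mult power2_eq_square)
  then show "QuadRes (int q) (int x)" unfolding QuadRes_def by blast
next
  assume "QuadRes (int q) (int x)"
  then obtain y :: int where y: "[y^2 = int x] (mod int q)" unfolding QuadRes_def by blast
  define y' where "y' = nat (y mod int q)"
  have qpos: "int q > 0" using q2 by simp
  have iy: "int y' = y mod int q" using qpos unfolding y'_def by simp
  have "[int y' = y] (mod int q)" using iy by (simp add: cong_def)
  then have "[int y' ^ 2 = y ^ 2] (mod int q)" by (rule cong_pow)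
  then have "[int y' ^ 2 = int x] (mod int q)" using y cong_trans by blast
  then have "[int (y'*y') = int x] (mod int q)" by (simp add: power2_eq_square)
  then have c: "[y'*y' = x] (mod q)" using cong_int_iff by blast
  then have e: "(y'*y') mod q = x" using G_mod[OF x] by (simp add: cong_def)
  have "y' < q" using iy qpos by (metis of_nat_less_iff pos_mod_bound)
  moreover have "y' \<noteq> 0"
  proof
    assume "y' = 0" then have "x = 0" using e by simp
    then show False using x G_iff by simp
  qed
  ultimately have "y' \<in> G" using G_iff by simp
  then show "x \<in> Qs" using e x unfolding Qs_def by blast
qed

definition Lg :: "nat \<Rightarrow> int" where "Lg x = (if x \<in> Qs then 1 else -1)"

lemma Lg_cong:
  assumes q3: "q > 2" and x: "x \<in> G"
  shows "[Lg x = int x ^ ((q - 1) div 2)] (mod int q)"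
proof -
  have "\<not> [int x = 0] (mod int q)"
  proof
    assume "[int x = 0] (mod int q)"
    then have "[x = 0] (mod q)" using cong_int_iff by (metis of_nat_0)
    then have "q dvd x" by (simp add: cong_0_iff)
    then show False using G_ndvd[OF x] by simp
  qed
  then have "Legendre (int x) (int q) = Lg x" unfolding Legendre_def Lg_def using QR_iff[OF x] by simp
  then show ?thesis using euler_criterion[OF qp q3, of "int x"] by simp
qed

lemma Qmul:
  assumes q3: "q > 2" and a: "a \<in> G" and b: "b \<in> G"
  shows "(a*b) mod q \<in> Qs \<longleftrightarrow> (a \<in> Qs \<longleftrightarrow> b \<in> Qs)"
proof -
  define h where "h = (q - 1) div 2"
  have ab: "(a*b) mod q \<in> G" using Gmul a b by blast
  have "[(a*b) mod q = a*b] (mod q)" by (simp add: cong_def)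
  then have "[int ((a*b) mod q) = int a * int b] (mod int q)" using cong_int_iff by (metis of_nat_mult)
  then have "[int ((a*b) mod q) ^ h = (int a * int b) ^ h] (mod int q)" by (rule cong_pow)
  then have c1: "[int ((a*b) mod q) ^ h = int a ^ h * int b ^ h] (mod int q)" by (simp add: power_mult_distrib)
  have "[Lg a * Lg b = int a ^ h * int b ^ h] (mod int q)"
    using cong_mult[OF Lg_cong[OF q3 a] Lg_cong[OF q3 b]] h_def by simp
  then have "[Lg ((a*b) mod q) = Lg a * Lg b] (mod int q)"
    using Lg_cong[OF q3 ab] c1 h_def by (metis cong_sym cong_trans)
  then have dv: "int q dvd Lg ((a*b) mod q) - Lg a * Lg b" by (simp add: cong_iff_dvd_diff)
  have "Lg ((a*b) mod q) = Lg a * Lg b"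
  proof (rule ccontr)
    assume ne: "Lg ((a*b) mod q) \<noteq> Lg a * Lg b"
    have "Lg ((a*b) mod q) - Lg a * Lg b = 2 \<or> Lg ((a*b) mod q) - Lg a * Lg b = -2"
      using ne unfolding Lg_def by (auto split: if_splits)
    then have "int q dvd 2" using dv by (metis dvd_minus_iff)
    then have "q dvd 2" by presburger
    then have "q \<le> 2" by (rule dvd_imp_le) simp
    then show False using q3 by linarith
  qed
  then show ?thesis unfolding Lg_def by (auto split: if_splits)
qed

lemma QC:
  assumes q3: "q > 2"
  shows "2 * card Qs \<le> q - 1"
proof -
  define rt where "rt z = (SOME y. y \<in> G \<and> (y*y) mod q = z)" for z
  have rt: "\<And>z. z \<in> Qs \<Longrightarrow> rt z \<in> G \<and> (rt z * rt z) mod q = z"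
    unfolding rt_def Qs_def by (rule someI_ex) blast
  have neg: "\<And>y. y \<in> G \<Longrightarrow> q - y \<in> G \<and> ((q - y)*(q - y)) mod q = (y*y) mod q"
  proof -
    fix y assume y: "y \<in> G"
    then have yq: "1 \<le> y" "y < q" using G_iff by auto
    then have "q - y \<in> G" using G_iff by simp
    moreover have "[(q - y)*(q - y) = y*y] (mod q)"
    proof -
      have iq: "int (q - y) = int q - int y" using yq by simp
      have "int ((q - y)*(q - y)) - int (y*y) = (int q - int y)*(int q - int y) - int y * int y"
        unfolding of_nat_mult iq ..
      also have "... = int q * (int q - 2 * int y)" by (simp add: algebra_simps)
      finally have "int ((q - y)*(q - y)) - int (y*y) = int q * (int q - 2 * int y)" .
      then have "[int ((q - y)*(q - y)) = int (y*y)] (mod int q)" by (simp add: cong_iff_dvd_diff)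
      then show ?thesis using cong_int_iff by blast
    qed
    ultimately show "q - y \<in> G \<and> ((q - y)*(q - y)) mod q = (y*y) mod q" by (simp add: cong_def)
  qed
  have qodd: "odd q" using prime_odd_nat[OF qp q3] .
  define psi where "psi zb = (if snd zb then rt (fst zb) else q - rt (fst zb))" for zb
  have "inj_on psi (Qs \<times> UNIV)"
  proof
    fix x y assume x: "x \<in> Qs \<times> UNIV" and y: "y \<in> Qs \<times> UNIV" and e: "psi x = psi y"
    obtain z b where zb: "x = (z, b)" by (cases x)
    obtain z' b' where zb': "y = (z', b')" by (cases y)
    have z: "z \<in> Qs" "z' \<in> Qs" using x y zb zb' by auto
    have sq: "(psi x * psi x) mod q = z" "(psi y * psi y) mod q = z'"
      using rt[OF z(1)] rt[OF z(2)] neg[of "rt z"] neg[of "rt z'"] zb zb' unfolding psi_def by auto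
    then have "z = z'" using e by simp
    moreover have "b = b'"
    proof (rule ccontr)
      assume "b \<noteq> b'"
      then have "rt z = q - rt z" using e \<open>z = z'\<close> zb zb' unfolding psi_def by (cases b) auto
      then have "2 * rt z = q" using rt[OF z(1)] G_iff by auto
      then show False using qodd by auto
    qed
    ultimately show "x = y" using zb zb' by simp
  qed
  moreover have "psi ` (Qs \<times> UNIV) \<subseteq> G" using rt neg unfolding psi_def by auto
  ultimately have "card (Qs \<times> (UNIV :: bool set)) \<le> card G" using card_inj_on_le fin_G by blast
  then show ?thesis using cardG by (simp add: card_cartesian_product)
qed

end



context qctx begin

definition neg :: "nat \<Rightarrow> nat" where "neg n = q - n mod q"

lemma ndvd_G: "\<not> q dvd x \<Longrightarrow> x mod q \<in> G"
proof -
  assume "\<not> q dvd x"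
  then have "x mod q \<noteq> 0" by (simp add: mod_eq_0_iff_dvd)
  moreover have "x mod q < q" using q2 by simp
  ultimately show ?thesis using G_iff by simp
qed

lemma neg_G: "\<not> q dvd n \<Longrightarrow> neg n \<in> G"
proof -
  assume "\<not> q dvd n"
  then have "n mod q \<in> G" by (rule ndvd_G)
  then have "1 \<le> n mod q" "n mod q < q" using G_iff by auto
  then show ?thesis unfolding neg_def using G_iff by simp
qed

lemma neg_cong: "[neg n + n = 0] (mod q)"
proof -
  have r: "n mod q < q" using q2 by simp
  have n: "n = q*(n div q) + n mod q" by simp
  have "neg n + n = q - n mod q + (q*(n div q) + n mod q)" unfolding neg_def using n by simp
  also have "... = q + q * (n div q)" using r by linarith
  also have "... = q * (n div q + 1)" by simp
  finally show ?thesis by (simp add: cong_0_iff)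
qed

lemma neg_mul:
  assumes "\<not> q dvd n" "\<not> q dvd r"
  shows "neg (n*r) = (neg n * (r mod q)) mod q"
proof -
  have "[(neg n + n) * r = 0 * r] (mod q)" using cong_mult[OF neg_cong cong_refl] by blast
  then have "[neg n * r + n*r = 0] (mod q)" by (simp add: algebra_simps)
  moreover have "[neg (n*r) + n*r = 0] (mod q)" by (rule neg_cong)
  ultimately have "[neg (n*r) + n*r = neg n * r + n*r] (mod q)" using cong_sym cong_trans by blast
  then have "[neg (n*r) = neg n * r] (mod q)" using cong_add_rcancel_nat by blast
  then have "neg (n*r) mod q = (neg n * r) mod q" by (simp add: cong_def)
  moreover have "\<not> q dvd n*r" using assms prime_dvd_mult_iff[OF qp] by blast
  then have "neg (n*r) < q" using neg_G G_iff by blast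
  ultimately show ?thesis by (simp add: mod_mult_right_eq)
qed

lemma negm1: "[neg n = (q-1)*n] (mod q)"
proof -
  have "(q-1)*n + n = q*n" using q2 by (metis Suc_diff_1 add.commute less_le_trans mult_Suc pos2)
  then have "[(q-1)*n + n = 0] (mod q)" by (simp add: cong_0_iff)
  then have "[neg n + n = (q-1)*n + n] (mod q)" using neg_cong cong_sym cong_trans by blast
  then show ?thesis using cong_add_rcancel_nat by blast
qed

lemma negsq: "y \<in> G \<Longrightarrow> q - y \<in> G \<and> ((q - y)*(q - y)) mod q = (y*y) mod q"
proof -
  fix y assume y: "y \<in> G"
  then have yq: "1 \<le> y" "y < q" using G_iff by auto
  then have "q - y \<in> G" using G_iff by simp
  moreover have "[(q - y)*(q - y) = y*y] (mod q)"
  proof -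
    have iq: "int (q - y) = int q - int y" using yq by simp
    have "int ((q - y)*(q - y)) - int (y*y) = (int q - int y)*(int q - int y) - int y * int y"
      unfolding of_nat_mult iq ..
    also have "... = int q * (int q - 2 * int y)" by (simp add: algebra_simps)
    finally have "int ((q - y)*(q - y)) - int (y*y) = int q * (int q - 2 * int y)" .
    then have "[int ((q - y)*(q - y)) = int (y*y)] (mod int q)" by (simp add: cong_iff_dvd_diff)
    then show ?thesis using cong_int_iff by blast
  qed
  ultimately show "q - y \<in> G \<and> ((q - y)*(q - y)) mod q = (y*y) mod q" by (simp add: cong_def)
qed

lemma T_G: "T n = G \<Longrightarrow> 0 < n*r \<Longrightarrow> \<not> q dvd n*r \<Longrightarrow> T (n*r) = G"
  using T_mono[of n r] T_sub[of "n*r"] by blast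

lemma P2a:
  assumes n: "0 < n" "\<not> q dvd n" and TG: "T n = G" and nq: "neg n \<in> Qs"
  shows "reach n"
proof -
  obtain y where y: "y \<in> G" "(y*y) mod q = neg n" using nq unfolding Qs_def by blast
  have yT: "y \<in> T n" using y TG by simp
  define d where "d = dv n y"
  have d: "d dvd n" "d mod q = y" using dv[OF yT] d_def by auto
  have "[d = y] (mod q)" using d G_mod[OF y(1)] by (simp add: cong_def)
  then have "[d*d = y*y] (mod q)" using cong_mult by blast
  moreover have "[y*y = neg n] (mod q)" using y G_mod[OF neg_G[OF n(2)]] by (simp add: cong_def)
  ultimately have "[d*d = neg n] (mod q)" using cong_trans by blast
  then have "[d*d + n = neg n + n] (mod q)" using cong_add[OF _ cong_refl] by blast
  then have "[d*d + n = 0] (mod q)" using neg_cong cong_trans by blast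
  then have "q dvd d*d + n" by (simp add: cong_0_iff)
  moreover have "d*d + n = d * (d + n div d)" using d(1) by (simp add: algebra_simps)
  ultimately have "q dvd d * (d + n div d)" by simp
  moreover have "\<not> q dvd d" using d(1) n(2) dvd_trans by blast
  ultimately have "q dvd (d + n div d)" using prime_dvd_mult_iff[OF qp] by blast
  then show ?thesis using R1 d(1) by blast
qed

lemma PN:
  assumes q3: "q > 2" and n: "0 < n" "\<not> q dvd n" and TG: "T n = G" and nq: "neg n \<notin> Qs"
    and d: "d dvd n" and r: "prime r" "r dvd (d + n div d)" "r \<noteq> q" "r mod q \<notin> Qs"
  shows "reach n"
proof -
  have nqr: "\<not> q dvd r" using primes_dvd_imp_eq[OF qp r(1)] r(3) by blast
  have n': "0 < n*r" "\<not> q dvd n*r" using n nqr r(1) prime_gt_0_nat prime_dvd_mult_iff[OF qp] by auto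
  have TG': "T (n*r) = G" using T_G[OF TG n'] .
  have "neg (n*r) = (neg n * (r mod q)) mod q" using neg_mul[OF n(2) nqr] .
  moreover have "neg n \<in> G" "r mod q \<in> G" using neg_G[OF n(2)] ndvd_G[OF nqr] by auto
  ultimately have "neg (n*r) \<in> Qs" using Qmul[OF q3] nq r(4) by simp
  then have "reach (n*r)" using P2a[OF n' TG'] by blast
  then show ?thesis using R2 d r(1,2) by blast
qed

lemma phi_inj:
  assumes n: "0 < n" "\<not> q dvd n"
  shows "inj_on (\<lambda>t. (F n t, t \<le> cmp n t)) (T n)"
proof
  fix t t' assume a: "t \<in> T n" "t' \<in> T n" "(F n t, t \<le> cmp n t) = (F n t', t' \<le> cmp n t')"
  then have eq: "F n t = F n t'" and fl: "(t \<le> cmp n t) = (t' \<le> cmp n t')" by auto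
  show "t = t'"
  proof (rule ccontr)
    assume "t \<noteq> t'"
    then have c1: "t' = cmp n t" using FL[OF n a(1,2) eq] by auto
    then have c2: "cmp n t' = t" using cmp_cmp[OF n a(1)] by simp
    show False using fl c1 c2 \<open>t \<noteq> t'\<close> by auto
  qed
qed

end



context qctx begin

lemma Qs_cl: "q > 2 \<Longrightarrow> a \<in> Qs \<Longrightarrow> b \<in> Qs \<Longrightarrow> (a*b) mod q \<in> Qs"
proof -
  assume q3: "q > 2" and ab: "a \<in> Qs" "b \<in> Qs"
  then have "a \<in> G" "b \<in> G" using Qs_G by auto
  then show ?thesis using Qmul[OF q3] ab by blast
qed

lemma pos_sum: "0 < (n::nat) \<Longrightarrow> d dvd n \<Longrightarrow> 0 < d + n div d"
proof -
  assume a: "0 < n" "d dvd n"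
  have "0 < d" using dvd_pos_nat[OF a] .
  then show ?thesis by simp
qed

lemma Qs_1: "1 \<in> Qs"
proof -
  have "1 \<in> G" using q2 G_iff by simp
  then have "(1*1) mod q \<in> Qs" by (rule sq_Qs)
  then show ?thesis using q2 by simp
qed

lemma P2:
  assumes q3: "q > 2" and n: "0 < n" "\<not> q dvd n" and TG: "T n = G"
  shows "reach n"
proof (cases "neg n \<in> Qs")
  case True then show ?thesis using P2a[OF n TG] by blast
next
  case nq: False
  have step: "\<And>d. d dvd n \<Longrightarrow> (d + n div d) mod q \<notin> Qs \<Longrightarrow> reach n"
  proof -
    fix d assume d: "d dvd n" "(d + n div d) mod q \<notin> Qs"
    have ps: "0 < d + n div d" using pos_sum[OF n(1) d(1)] .
    have cl: "\<And>a b. a \<in> Qs \<Longrightarrow> b \<in> Qs \<Longrightarrow> (a*b) mod q \<in> Qs" using Qs_cl[OF q3] .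
    obtain r where r: "prime r" "r dvd (d + n div d)" "r mod q \<notin> Qs"
      using LS'[where M=Qs, OF cl Qs_1 ps d(2)] by blast
    show "reach n"
    proof (cases "r = q")
      case True then have "q dvd d + n div d" using r(2) by simp
      then show ?thesis using R1[OF d(1)] by blast
    next
      case False show ?thesis by (rule PN[OF q3 n TG nq d(1) r(1,2) False r(3)])
    qed
  qed
  show ?thesis
  proof (cases "\<exists>d. d dvd n \<and> (d + n div d) mod q \<notin> Qs")
    case True then show ?thesis using step by blast
  next
    case False
    then have bad: "\<And>d. d dvd n \<Longrightarrow> (d + n div d) mod q \<in> Qs" by blast
    have FQ: "\<And>t. t \<in> T n \<Longrightarrow> F n t \<in> Qs"
    proof -
      fix t assume "t \<in> T n"
      then have "dv n t dvd n" using dv by blast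
      then show "F n t \<in> Qs" unfolding F_def by (rule bad)
    qed
    define phi where "phi t = (F n t, t \<le> cmp n t)" for t
    have inj: "inj_on phi (T n)" using phi_inj[OF n] unfolding phi_def .
    have sub: "phi ` T n \<subseteq> Qs \<times> UNIV" using FQ unfolding phi_def by auto
    have finQ: "finite (Qs \<times> (UNIV :: bool set))" using finite_subset[OF Qs_G fin_G] by simp
    have c1: "card (phi ` T n) = q - 1" using card_image[OF inj] TG cardG by simp
    have c2: "card (Qs \<times> (UNIV :: bool set)) = 2 * card Qs" by (simp add: card_cartesian_product)
    have "card (phi ` T n) \<le> card (Qs \<times> (UNIV :: bool set))" using card_mono[OF finQ sub] .
    then have "card (phi ` T n) = card (Qs \<times> (UNIV :: bool set))" using c1 c2 QC[OF q3] by linarith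
    then have img: "phi ` T n = Qs \<times> UNIV" using card_subset_eq[OF finQ sub] by blast
    have nG: "n mod q \<in> G" using ndvd_G[OF n(2)] .
    have nnQ: "n mod q \<notin> Qs"
    proof
      assume "n mod q \<in> Qs"
      then obtain y where y: "y \<in> G" "(y*y) mod q = n mod q" unfolding Qs_def by blast
      have yT: "y \<in> T n" using y TG by simp
      define d where "d = dv n y"
      have d: "d dvd n" "d mod q = y" using dv[OF yT] d_def by auto
      have "(d * y) mod q = (y * y) mod q" using d(2) by (metis mod_mult_left_eq)
      also have "... = (d * (n div d)) mod q" using y(2) d(1) by simp
      finally have "(d * y) mod q = (d * (n div d)) mod q" .
      moreover have "\<not> q dvd d" using d(1) n(2) dvd_trans by blast
      ultimately have "y mod q = (n div d) mod q" using canc by blast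
      then have cy: "cmp n y = y" using cmp_any[OF n yT d(1,2)] G_mod[OF y(1)] by simp
      have "(F n y, False) \<in> phi ` T n" using img FQ[OF yT] by blast
      then obtain t where t: "t \<in> T n" "F n t = F n y" "\<not> (t \<le> cmp n t)" unfolding phi_def by auto
      then have "t = y" using FL[OF n yT t(1)] cy by auto
      then show False using t(3) cy by simp
    qed
    have m1: "q - 1 \<in> Qs"
    proof -
      have m1G: "q - 1 \<in> G" using q3 G_iff by simp
      have "(neg n * (n mod q)) mod q \<in> Qs" using Qmul[OF q3 neg_G[OF n(2)] nG] nq nnQ by simp
      define s where "s = ((n mod q) * (n mod q)) mod q"
      have sQ: "s \<in> Qs" using sq_Qs[OF nG] s_def by simp
      have "(neg n * (n mod q)) mod q = (neg n * n) mod q" by (simp add: mod_mult_right_eq)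
      also have "... = ((q-1)*n*n) mod q" using cong_mult[OF negm1 cong_refl[of n]] by (simp add: cong_def)
      also have "... = ((q-1) * ((n*n) mod q)) mod q" by (simp add: mod_mult_right_eq mult.assoc)
      also have "... = ((q-1) * s) mod q" unfolding s_def by (simp only: mod_mult_eq)
      finally have "((q-1) * s) mod q \<in> Qs" using \<open>(neg n * (n mod q)) mod q \<in> Qs\<close> by simp
      then show ?thesis using Qmul[OF q3 m1G] sQ Qs_G by blast
    qed
    define sq where "sq y = (y*y) mod q" for y
    define Q4 where "Q4 = sq ` Qs"
    have Q4Q: "Q4 \<subseteq> Qs" unfolding Q4_def sq_def using sq_Qs Qs_G by blast
    have finQs: "finite Qs" using finite_subset[OF Qs_G fin_G] .
    have "\<not> inj_on sq Qs"
    proof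
      assume i: "inj_on sq Qs"
      have "sq (q - 1) = sq 1" using negsq[of 1] q2 G_iff unfolding sq_def by simp
      then have "q - 1 = 1" using i m1 Qs_1 by (meson inj_onD)
      then show False using q3 by simp
    qed
    then have "card Q4 < card Qs"
    proof -
      have "card (sq ` Qs) \<noteq> card Qs" using inj_on_iff_eq_card[OF finQs, of sq] \<open>\<not> inj_on sq Qs\<close> by blast
      then show ?thesis using card_image_le[OF finQs, of sq] unfolding Q4_def by linarith
    qed
    then obtain z where z: "z \<in> Qs" "z \<notin> Q4"
    proof -
      assume lt: "card Q4 < card Qs" and th: "\<And>z. z \<in> Qs \<Longrightarrow> z \<notin> Q4 \<Longrightarrow> thesis"
      have "\<not> Qs \<subseteq> Q4"
      proof
        assume "Qs \<subseteq> Q4"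
        then have "card Qs \<le> card Q4" using card_mono finite_subset[OF Q4Q finQs] by blast
        then show False using lt by linarith
      qed
      then show thesis using th by blast
    qed
    have "(z, True) \<in> phi ` T n" using img z by blast
    then obtain t where t: "t \<in> T n" "F n t = z" unfolding phi_def by auto
    define d where "d = dv n t"
    have d: "d dvd n" "(d + n div d) mod q = z" using dv[OF t(1)] t(2) unfolding d_def F_def by auto
    have Q4cl: "\<And>a b. a \<in> Q4 \<Longrightarrow> b \<in> Q4 \<Longrightarrow> (a*b) mod q \<in> Q4"
    proof -
      fix a b assume "a \<in> Q4" "b \<in> Q4"
      then obtain y1 y2 where y: "y1 \<in> Qs" "a = (y1*y1) mod q" "y2 \<in> Qs" "b = (y2*y2) mod q"
        unfolding Q4_def sq_def by blast
      have "(y1*y2) mod q \<in> Qs" using Qs_cl[OF q3 y(1,3)] .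
      moreover have "(a*b) mod q = sq ((y1*y2) mod q)" unfolding sq_def y(2,4)
        by (metis mod_mult_eq mult.assoc mult.left_commute)
      ultimately show "(a*b) mod q \<in> Q4" unfolding Q4_def by blast
    qed
    have Q41: "1 \<in> Q4" unfolding Q4_def sq_def using Qs_1 q2 by (auto intro!: image_eqI[of _ _ 1])
    have ps: "0 < d + n div d" using pos_sum[OF n(1) d(1)] .
    have dz: "(d + n div d) mod q \<notin> Q4" using d(2) z(2) by simp
    obtain r where r: "prime r" "r dvd (d + n div d)" "r mod q \<notin> Q4"
      using LS'[where M=Q4, OF Q4cl Q41 ps dz] by blast
    show ?thesis
    proof (cases "r = q")
      case True then have "q dvd d + n div d" using r(2) by simp
      then show ?thesis using R1[OF d(1)] by blast
    next
      case rq: False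
      show ?thesis
      proof (cases "r mod q \<in> Qs")
        case False show ?thesis by (rule PN[OF q3 n TG nq d(1) r(1,2) rq False])
      next
        case rQ: True
        then obtain k where k: "k \<in> G" "(k*k) mod q = r mod q" unfolding Qs_def by blast
        have kQ: "k \<notin> Qs"
        proof
          assume "k \<in> Qs"
          then have "sq k \<in> Q4" unfolding Q4_def by blast
          then show False using k(2) r(3) unfolding sq_def by simp
        qed
        have nqr: "\<not> q dvd r" using primes_dvd_imp_eq[OF qp r(1)] rq by blast
        have n': "0 < n*r" "\<not> q dvd n*r" using n nqr r(1) prime_gt_0_nat prime_dvd_mult_iff[OF qp] by auto
        have TG': "T (n*r) = G" using T_G[OF TG n'] .
        have rG: "r mod q \<in> G" using ndvd_G[OF nqr] .
        have nq': "neg (n*r) \<notin> Qs" using neg_mul[OF n(2) nqr] Qmul[OF q3 neg_G[OF n(2)] rG] nq rQ by simp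
        have kT: "k \<in> T (n*r)" using k TG' by simp
        define d' where "d' = dv (n*r) k"
        define e' where "e' = (n*r) div d'"
        have d': "d' dvd n*r" "d' mod q = k" using dv[OF kT] d'_def by auto
        have de: "d' * e' = n*r" using d'(1) e'_def by simp
        have "(d' * e') mod q = ((d' mod q) * e') mod q" by (simp add: mod_mult_left_eq)
        then have "(k * e') mod q = (d' * e') mod q" using d'(2) by simp
        also have "... = (n * r) mod q" using de by simp
        also have "... = (n * (r mod q)) mod q" by (simp add: mod_mult_right_eq)
        also have "... = (n * ((k*k) mod q)) mod q" using k(2) by simp
        also have "... = (n * (k*k)) mod q" by (simp add: mod_mult_right_eq)
        also have "... = (k * (k*n)) mod q" by (simp add: ac_simps)
        finally have "(k * e') mod q = (k * (k*n)) mod q" .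
        then have ee: "e' mod q = (k*n) mod q" using canc G_ndvd[OF k(1)] by blast
        have "(d' + e') mod q = (d' mod q + e' mod q) mod q" by (simp add: mod_add_eq)
        also have "... = (k + (k*n) mod q) mod q" using d'(2) ee by simp
        also have "... = (k + k*n) mod q" by (simp add: mod_add_right_eq)
        also have "... = (k * (1 + n)) mod q" by (simp add: algebra_simps)
        also have "... = (k * ((1 + n) mod q)) mod q" by (simp add: mod_mult_right_eq)
        finally have s': "(d' + e') mod q = (k * ((1 + n) mod q)) mod q" .
        have "(1 + n div 1) mod q \<in> Qs" using bad[of 1] by simp
        then have oQ: "(1 + n) mod q \<in> Qs" by simp
        have s'Q: "(d' + (n*r) div d') mod q \<notin> Qs"
          using s' Qmul[OF q3 k(1)] oQ Qs_G kQ unfolding e'_def by auto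
        have ps': "0 < d' + (n*r) div d'" using pos_sum[OF n'(1) d'(1)] .
        have cl: "\<And>a b. a \<in> Qs \<Longrightarrow> b \<in> Qs \<Longrightarrow> (a*b) mod q \<in> Qs" using Qs_cl[OF q3] .
        obtain r' where r': "prime r'" "r' dvd (d' + (n*r) div d')" "r' mod q \<notin> Qs"
          using LS'[where M=Qs, OF cl Qs_1 ps' s'Q] by blast
        have "reach (n*r)"
        proof (cases "r' = q")
          case True then have "q dvd d' + (n*r) div d'" using r'(2) by simp
          then show ?thesis using R1[OF d'(1)] by blast
        next
          case False show ?thesis by (rule PN[OF q3 n' TG' nq' d'(1) r'(1,2) False r'(3)])
        qed
        then show ?thesis using R2 d(1) r(1,2) by blast
      qed
    qed
  qed
qed

end



context qctx begin

lemma Stab_cl: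
  assumes AG: "A \<subseteq> G" and ab: "a \<in> Stab A" "b \<in> Stab A"
  shows "(a*b) mod q \<in> Stab A"
proof -
  have "a \<in> G" "b \<in> G" using ab unfolding Stab_def by auto
  then have "(a*b) mod q \<in> G" using Gmul by blast
  moreover have "\<forall>t\<in>A. ((a*b) mod q * t) mod q \<in> A"
  proof
    fix t assume "t \<in> A"
    then have "(b*t) mod q \<in> A" using ab unfolding Stab_def by auto
    then have "(a*((b*t) mod q)) mod q \<in> A" using ab unfolding Stab_def by auto
    then show "((a*b) mod q * t) mod q \<in> A" by (simp add: mod_mult_left_eq mod_mult_right_eq mult.assoc)
  qed
  ultimately show ?thesis unfolding Stab_def by auto
qed

lemma Stab_1: "A \<subseteq> G \<Longrightarrow> 1 \<in> Stab A"
proof -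
  assume AG: "A \<subseteq> G"
  have "1 \<in> G" using q2 G_iff by simp
  moreover have "\<forall>t\<in>A. (1*t) mod q \<in> A"
  proof
    fix t assume "t \<in> A"
    then have "t \<in> G" using AG by auto
    then show "(1*t) mod q \<in> A" using \<open>t \<in> A\<close> G_mod by simp
  qed
  ultimately show ?thesis unfolding Stab_def by auto
qed

lemma reach_all:
  "0 < n \<Longrightarrow> \<not> q dvd n \<Longrightarrow> \<forall>p. prime p \<longrightarrow> p < q \<longrightarrow> p dvd n \<Longrightarrow> reach n"
proof (induction "card G - card (T n)" arbitrary: n rule: less_induct)
  case less
  note n = less.prems(1,2) and sp = less.prems(3)
  show ?case
  proof (cases "q = 2")
    case True
    then have "odd n" using n(2) by simp
    then have "q dvd 1 + n div 1" using True by simp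
    then show ?thesis using R1[of 1 n] by simp
  next
    case False
    then have q3: "q > 2" using q2 by simp
    show ?thesis
    proof (cases "T n = G")
      case True then show ?thesis using P2[OF q3 n] by blast
    next
      case ne: False
      obtain d where d: "d dvd n" "(d + n div d) mod q \<notin> Stab (T n)" using grow[OF n sp ne] by blast
      have AG: "T n \<subseteq> G" using T_sub[OF n] .
      have cl: "\<And>a b. a \<in> Stab (T n) \<Longrightarrow> b \<in> Stab (T n) \<Longrightarrow> (a*b) mod q \<in> Stab (T n)"
        using Stab_cl[OF AG] by blast
      have ps: "0 < d + n div d" using pos_sum[OF n(1) d(1)] .
      obtain r where r: "prime r" "r dvd (d + n div d)" "r mod q \<notin> Stab (T n)"
        using LS'[where M="Stab (T n)", OF cl Stab_1[OF AG] ps d(2)] by blast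
      show ?thesis
      proof (cases "r = q")
        case True then have "q dvd d + n div d" using r(2) by simp
        then show ?thesis using R1[OF d(1)] by blast
      next
        case rq: False
        have nqr: "\<not> q dvd r" using primes_dvd_imp_eq[OF qp r(1)] rq by blast
        have n': "0 < n*r" "\<not> q dvd n*r" using n nqr r(1) prime_gt_0_nat prime_dvd_mult_iff[OF qp] by auto
        have sp': "\<forall>p. prime p \<longrightarrow> p < q \<longrightarrow> p dvd n*r" using sp by auto
        have rG: "r mod q \<in> G" using ndvd_G[OF nqr] .
        then obtain t where t: "t \<in> T n" "((r mod q)*t) mod q \<notin> T n" using r(3) unfolding Stab_def by blast
        have "(r*t) mod q \<in> T (n*r)" using T_mul[OF t(1)] .
        moreover have "(r*t) mod q = ((r mod q)*t) mod q" by (simp add: mod_mult_left_eq)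
        ultimately have x: "((r mod q)*t) mod q \<in> T (n*r)" by simp
        have sub: "T n \<subseteq> T (n*r)" using T_mono .
        have "T n \<subset> T (n*r)" using sub x t(2) by blast
        then have "card (T n) < card (T (n*r))" using psubset_card_mono T_fin by blast
        moreover have "card (T (n*r)) \<le> card G" using card_mono[OF fin_G T_sub[OF n']] .
        ultimately have "card G - card (T (n*r)) < card G - card (T n)" by linarith
        then have "reach (n*r)" using less.hyps n' sp' by blast
        then show ?thesis using R2 d(1) r(1,2) by blast
      qed
    qed
  qed
qed

end



definition nxt :: "nat \<Rightarrow> nat" where "nxt m = (SOME r. prime r \<and> r dvd (m + 1))"

lemma nxt: "0 < m \<Longrightarrow> prime (nxt m) \<and> nxt m dvd (m + 1)"
proof -
  assume "0 < m"
  then have "m + 1 \<noteq> 1" by simp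
  then have "\<exists>r. prime r \<and> r dvd (m + 1)" using prime_factor_nat by blast
  then show ?thesis unfolding nxt_def by (rule someI_ex)
qed

fun ext :: "nat list \<Rightarrow> nat \<Rightarrow> nat list" where
  "ext L 0 = L"
| "ext L (Suc k) = ext L k @ [nxt (\<Prod>i<length (ext L k). ext L k ! i)]"

lemma ext_len: "length (ext L k) = length L + k"
  by (induction k) auto

lemma ext_pre: "i < length (ext L k) \<Longrightarrow> ext L (k + m) ! i = ext L k ! i"
proof (induction m)
  case 0 then show ?case by simp
next
  case (Suc m)
  have "i < length (ext L (k + m))" using Suc.prems ext_len by simp
  then have "ext L (k + Suc m) ! i = ext L (k + m) ! i" by (simp add: nth_append)
  then show ?case using Suc by simp
qed

definition seqp :: "nat list \<Rightarrow> nat \<Rightarrow> nat" where "seqp L j = ext L (Suc j) ! j"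

lemma seqp_ext: "i < length (ext L k) \<Longrightarrow> seqp L i = ext L k ! i"
proof -
  assume i: "i < length (ext L k)"
  have i2: "i < length (ext L (Suc i))" using ext_len by simp
  have "ext L (k + Suc i) ! i = ext L k ! i" using ext_pre[OF i] .
  moreover have "ext L (Suc i + k) ! i = ext L (Suc i) ! i" using ext_pre[OF i2] .
  ultimately show ?thesis unfolding seqp_def by (simp add: add.commute)
qed

lemma seqp_L: "j < length L \<Longrightarrow> seqp L j = L ! j"
  using seqp_ext[of j L 0] by simp

lemma seqp_nxt:
  assumes "length L \<le> j"
  shows "seqp L j = nxt (\<Prod>i<j. seqp L i)"
proof -
  obtain k where k: "j = length L + k" using assms le_Suc_ex by blast
  have lk: "length (ext L k) = j" using ext_len k by simp
  have "seqp L j = ext L (Suc k) ! j" using seqp_ext[of j L "Suc k"] ext_len k by simp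
  also have "... = nxt (\<Prod>i<length (ext L k). ext L k ! i)" using lk by (simp add: nth_append)
  also have "(\<Prod>i<length (ext L k). ext L k ! i) = (\<Prod>i<j. seqp L i)"
    using lk seqp_ext[of _ L k] by (intro prod.cong) auto
  finally show ?thesis .
qed

lemma seqp_prime:
  assumes "\<forall>x\<in>set L. prime x"
  shows "prime (seqp L j)"
proof (induction j rule: less_induct)
  case (less j)
  show ?case
  proof (cases "j < length L")
    case True then show ?thesis using seqp_L assms by simp
  next
    case False
    have "\<forall>i\<in>{..<j}. 0 < seqp L i" using less.IH prime_gt_0_nat by blast
    then have "0 < (\<Prod>i<j. seqp L i)" by (simp add: prod_pos)
    then show ?thesis using seqp_nxt[of L j] False nxt by simp
  qed
qed

lemma vchain_prime: "vchain n rs \<Longrightarrow> x \<in> set rs \<Longrightarrow> prime x"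
  by (induction rs arbitrary: n) auto

lemma vchain_nth:
  "vchain n rs \<Longrightarrow> i < length rs \<Longrightarrow>
    \<exists>d. d dvd (n * (\<Prod>l<i. rs!l)) \<and> rs!i dvd (d + (n * (\<Prod>l<i. rs!l)) div d)"
proof (induction rs arbitrary: n i)
  case Nil then show ?case by simp
next
  case (Cons r rs)
  show ?case
  proof (cases i)
    case 0 then show ?thesis using Cons.prems by simp
  next
    case (Suc i')
    have "vchain (n*r) rs" "i' < length rs" using Cons.prems Suc by auto
    then obtain d where d: "d dvd (n*r * (\<Prod>l<i'. rs!l))" "rs!i' dvd (d + (n*r * (\<Prod>l<i'. rs!l)) div d)"
      using Cons.IH by blast
    have "(\<Prod>l<Suc i'. (r#rs)!l) = (r#rs)!0 * (\<Prod>l<i'. (r#rs)!(Suc l))" by (rule prod.lessThan_Suc_shift)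
    then have "(\<Prod>l<i. (r#rs)!l) = r * (\<Prod>l<i'. rs!l)" using Suc by simp
    then have eq: "n * (\<Prod>l<i. (r#rs)!l) = n*r * (\<Prod>l<i'. rs!l)" by simp
    have e2: "(r#rs)!i = rs!i'" using Suc by simp
    show ?thesis unfolding eq e2 using d by blast
  qed
qed

lemma prod_split:
  assumes "i \<le> length rs"
  shows "(\<Prod>l<length ps + i. (ps @ rs)!l) = (\<Prod>l<length ps. ps!l) * (\<Prod>l<i. rs!l)"
  using assms
proof (induction i)
  case 0 then show ?case by (auto intro!: prod.cong simp: nth_append)
next
  case (Suc i)
  then have "(\<Prod>l<length ps + Suc i. (ps @ rs)!l) = (\<Prod>l<length ps + i. (ps @ rs)!l) * (ps @ rs) ! (length ps + i)"
    by simp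
  then show ?case using Suc by (simp add: nth_append mult.assoc)
qed

theorem proposition1:
  fixes P :: "nat set" and q :: nat
  assumes "finite P" and "\<forall>r\<in>P. prime r"
    and "q = (LEAST r. prime r \<and> r \<notin> P)"
  shows "\<exists>p. gen_euclid_seq P p \<and> (\<exists>j. p j = q)"
proof -
  have ex: "\<exists>r. prime r \<and> r \<notin> P"
  proof -
    obtain r where "prime r" "r > Max (insert 0 P)" using bigger_prime by blast
    then have "r \<notin> P" using assms(1) Max_ge[of "insert 0 P"] by fastforce
    then show ?thesis using \<open>prime r\<close> by blast
  qed
  have qP: "prime q" "q \<notin> P" using LeastI_ex[OF ex] assms(3) by auto
  have small: "\<And>p. prime p \<Longrightarrow> p < q \<Longrightarrow> p \<in> P"
    using not_less_Least assms(3) by blast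
  interpret qctx q using qP(1) by unfold_locales
  define ps where "ps = sorted_list_of_set P"
  have setps: "set ps = P" using assms(1) ps_def by simp
  have lenps: "length ps = card P" using ps_def by simp
  define n0 where "n0 = (\<Prod>l<length ps. ps!l)"
  have psprime: "\<And>l. l < length ps \<Longrightarrow> prime (ps!l)" using setps assms(2) nth_mem by blast
  have n0pos: "0 < n0" unfolding n0_def using psprime prime_gt_0_nat by (simp add: prod_pos)
  have n0q: "\<not> q dvd n0"
  proof
    assume "q dvd n0"
    then obtain l where l: "l < length ps" "q dvd ps!l" unfolding n0_def using prime_dvd_prod_iff[OF _ qP(1)] by auto
    then have "q = ps!l" using primes_dvd_imp_eq[OF qP(1) psprime[OF l(1)]] by blast
    then show False using l(1) setps qP(2) nth_mem by blast
  qed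
  have n0sp: "\<forall>p. prime p \<longrightarrow> p < q \<longrightarrow> p dvd n0"
  proof (intro allI impI)
    fix p assume "prime p" "p < q"
    then have "p \<in> set ps" using small setps by blast
    then obtain l where "l < length ps" "ps!l = p" by (auto simp: in_set_conv_nth)
    then show "p dvd n0" unfolding n0_def by (intro dvd_prod_eqI) auto
  qed
  have "reach n0" using reach_all[OF n0pos n0q n0sp] .
  then obtain rs where rs: "vchain n0 rs" "q \<in> set rs" unfolding reach_def by blast
  define L where "L = ps @ rs"
  define p where "p = seqp L"
  have Lprime: "\<forall>x\<in>set L. prime x" using L_def setps assms(2) vchain_prime[OF rs(1)] by auto
  have pprime: "\<forall>j. prime (p j)" using seqp_prime[OF Lprime] p_def by simp
  have img: "p ` {..<card P} = P"
  proof -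
    have "p ` {..<card P} = (\<lambda>l. ps!l) ` {..<length ps}"
      using lenps seqp_L[of _ L] unfolding p_def L_def by (intro image_cong) (auto simp: nth_append)
    also have "... = set ps" by (auto simp: in_set_conv_nth)
    finally show ?thesis using setps by simp
  qed
  have prodp: "\<And>j. j \<le> length L \<Longrightarrow> (\<Prod>i<j. p i) = (\<Prod>i<j. L!i)"
    unfolding p_def using seqp_L by (intro prod.cong) auto
  have step: "\<forall>j\<ge>card P. \<exists>d. d dvd (\<Prod>i<j. p i) \<and> p j dvd (d + (\<Prod>i<j. p i) div d)"
  proof (intro allI impI)
    fix j assume j: "card P \<le> j"
    show "\<exists>d. d dvd (\<Prod>i<j. p i) \<and> p j dvd (d + (\<Prod>i<j. p i) div d)"
    proof (cases "j < length L")
      case True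
      define i where "i = j - length ps"
      have ji: "j = length ps + i" "i < length rs" using j True lenps L_def i_def by auto
      have e1: "(\<Prod>i<j. p i) = (\<Prod>i<j. L!i)" using prodp[of j] True by simp
      have "(\<Prod>l<length ps + i. L!l) = n0 * (\<Prod>l<i. rs!l)"
        using prod_split[of i rs ps] ji(2) unfolding n0_def L_def by simp
      then have e2: "(\<Prod>i<j. L!i) = n0 * (\<Prod>l<i. rs!l)" using ji(1) by simp
      have e3: "p j = rs ! i" using seqp_L[OF True] ji unfolding p_def L_def by (simp add: nth_append)
      obtain d where d: "d dvd (n0 * (\<Prod>l<i. rs!l))" "rs!i dvd (d + (n0 * (\<Prod>l<i. rs!l)) div d)"
        using vchain_nth[OF rs(1) ji(2)] by blast
      show ?thesis unfolding e1 e2 e3 using d by blast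
    next
      case False
      have pos: "0 < (\<Prod>i<j. p i)" using pprime prime_gt_0_nat by (simp add: prod_pos)
      have "p j = nxt (\<Prod>i<j. p i)" using seqp_nxt[of L j] False unfolding p_def by simp
      moreover have "(\<Prod>i<j. p i) div (\<Prod>i<j. p i) = 1" using pos by simp
      ultimately have "p j dvd (\<Prod>i<j. p i) + (\<Prod>i<j. p i) div (\<Prod>i<j. p i)" using nxt[OF pos] by simp
      moreover have "(\<Prod>i<j. p i) dvd (\<Prod>i<j. p i)" by (rule dvd_refl)
      ultimately show ?thesis by blast
    qed
  qed
  have "gen_euclid_seq P p" unfolding gen_euclid_seq_def using assms(1,2) img pprime step by blast
  moreover have "\<exists>j. p j = q"
  proof -
    obtain i where i: "i < length rs" "rs!i = q" using rs(2) by (auto simp: in_set_conv_nth)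
    have "length ps + i < length L" using i L_def by simp
    then have "p (length ps + i) = q" using seqp_L i unfolding p_def L_def by (simp add: nth_append)
    then show ?thesis by blast
  qed
  ultimately show ?thesis by blast
qed


end
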